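(* Let $B$ be a $\Sigma$-ring containing a $\Sigma$-pseudofield $L$ as a $\Sigma$-subring such that $C_L:=L^\sigma$ is a $\Sigma_1$-closed pseudofield. Let $C\subseteq B^\sigma$ be a $\Sigma_1$-stable subring with $C_L\subseteq C$. Then the natural $\Sigma$-homomorphism $L\otimes_{C_L}C\to B$, $l\otimes c\mapsto lc$, is injective, so that $L\cdot C\cong L\otimes_{C_L}C$, where $L\cdot C$ is the subring of $B$ generated by $L$ and $C$.
   Context: All rings are commutative with $1$. Fix $\Sigma_0=\mathbb Z$ with generator $\sigma$, a finite abelian group $\Sigma_1=\mathbb Z/t_1\mathbb Z\oplus\dots\oplus\mathbb Z/t_s\mathbb Z$ ($t_i\ge2$), and $\Sigma=\Sigma_0\oplus\Sigma_1$. For a subgroup $\Sigma'\subseteq\Sigma$, a $\Sigma'$-ring is a ring with an action of $\Sigma'$ by ring automorphisms; $\Sigma'$-ideals are $\Sigma'$-stable ideals; $R^\sigma$ denotes the $\sigma$-invariants. A $\Sigma'$-ring is $\Sigma'$-simple if its only $\Sigma'$-ideals are $0$ and itself ($\neq0$). A ring is absolutely flat if every module over it is flat. A $\Sigma'$-pseudofield is an absolutely flat $\Sigma'$-simple ring. $C\{y_1,\dots,y_n\}_{\Sigma_1}$ is the polynomial ring over $C$ in indeterminates $\tau y_i$ ($\tau\in\Sigma_1$) with natural $\Sigma_1$-action; $\mathbb V(E)$ is the common zero set in $C^n$ and $\mathbb I(X)$ the ideal of polynomials vanishing on $X$. A $\Sigma_1$-pseudofield $C$ is $\Sigma_1$-closed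 if $\sqrt I=\mathbb I(\mathbb V(I))$ for every $n$ and every $\Sigma_1$-ideal $I\subseteq C\{y_1,\dots,y_n\}_{\Sigma_1}$. The $\Sigma$-action on $L\otimes_{C_L}C$ is the diagonal one. *)

theory Defs
  imports Main "HOL-Library.Poly_Mapping" "HOL-Library.Product_Plus"
begin

definition is_subring :: "'b::comm_ring_1 set \<Rightarrow> bool" where
  "is_subring R \<longleftrightarrow> 0 \<in> R \<and> 1 \<in> R \<and> (\<forall>x\<in>R. \<forall>y\<in>R. x + y \<in> R \<and> x * y \<in> R \<and> - x \<in> R)"

definition is_ideal_in :: "'b::comm_ring_1 set \<Rightarrow> 'b set \<Rightarrow> bool" where
  "is_ideal_in R J \<longleftrightarrow> J \<subseteq> R \<and> 0 \<in> J \<and> (\<forall>x\<in>J. \<forall>y\<in>J. x + y \<in> J)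
      \<and> (\<forall>r\<in>R. \<forall>x\<in>J. r * x \<in> J)"

definition ring_action :: "('g::ab_group_add \<Rightarrow> 'b::comm_ring_1 \<Rightarrow> 'b) \<Rightarrow> bool" where
  "ring_action act \<longleftrightarrow> (\<forall>x. act 0 x = x) \<and> (\<forall>g h x. act (g + h) x = act g (act h x))
     \<and> (\<forall>g. act g 1 = 1 \<and> (\<forall>x y. act g (x + y) = act g x + act g y \<and> act g (x * y) = act g x * act g y))"

definition stable :: "('g \<Rightarrow> 'b \<Rightarrow> 'b) \<Rightarrow> 'g set \<Rightarrow> 'b set \<Rightarrow> bool" where
  "stable act S R \<longleftrightarrow> (\<forall>g\<in>S. \<forall>x\<in>R. act g x \<in> R)"

definition act_simple :: "('g \<Rightarrow> 'b::comm_ring_1 \<Rightarrow> 'b) \<Rightarrow> 'g set \<Rightarrow> 'b set \<Rightarrow> bool" where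
  "act_simple act S R \<longleftrightarrow> R \<noteq> {0} \<and>
     (\<forall>J. is_ideal_in R J \<and> stable act S J \<longrightarrow> J = {0} \<or> J = R)"

text \<open>Absolutely flat commutative ring, via the von Neumann regularity characterisation.\<close>
definition abs_flat :: "'b::comm_ring_1 set \<Rightarrow> bool" where
  "abs_flat R \<longleftrightarrow> (\<forall>a\<in>R. \<exists>x\<in>R. a = a * a * x)"

definition pseudofield :: "('g \<Rightarrow> 'b::comm_ring_1 \<Rightarrow> 'b) \<Rightarrow> 'g set \<Rightarrow> 'b set \<Rightarrow> bool" where
  "pseudofield act S R \<longleftrightarrow> is_subring R \<and> stable act S R \<and> abs_flat R \<and> act_simple act S R"

section \<open>Sigma = Z (+) Sigma1, with Sigma1 = 'g a finite abelian group\<close>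

definition Sigma1 :: "(int \<times> 'g::ab_group_add) set" where
  "Sigma1 = {(0, t) | t. True}"

definition sigma :: "int \<times> 'g::ab_group_add" where
  "sigma = (1, 0)"

definition invariants :: "(int \<times> 'g::ab_group_add \<Rightarrow> 'b \<Rightarrow> 'b) \<Rightarrow> 'b set \<Rightarrow> 'b set" where
  "invariants act R = {x \<in> R. act sigma x = x}"

text \<open>Indeterminates are (tau, i) standing for tau y_i; monomials are finitely supported
  exponent maps, polynomials finitely supported coefficient maps.\<close>
type_synonym ('g, 'b) spoly = "(('g \<times> nat) \<Rightarrow>\<^sub>0 nat) \<Rightarrow>\<^sub>0 'b"

definition spoly_ring :: "'b::comm_ring_1 set \<Rightarrow> nat \<Rightarrow> ('g, 'b) spoly set" where
  "spoly_ring C n = {p. (\<forall>m\<in>Poly_Mapping.keys p. Poly_Mapping.lookup p m \<in> C \<and> (\<forall>v\<in>Poly_Mapping.keys m. snd v < n))}"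

definition shift_mon :: "'g::ab_group_add \<Rightarrow> (('g \<times> nat) \<Rightarrow>\<^sub>0 nat) \<Rightarrow> (('g \<times> nat) \<Rightarrow>\<^sub>0 nat)" where
  "shift_mon t m = Poly_Mapping.map_key (\<lambda>(a, i). (a - t, i)) m"

text \<open>natural Sigma1-action: tau acts on coefficients, and sends tau' y_i to (tau+tau') y_i\<close>
definition spoly_act :: "(int \<times> 'g::ab_group_add \<Rightarrow> 'b::comm_ring_1 \<Rightarrow> 'b) \<Rightarrow> 'g \<Rightarrow> ('g, 'b) spoly \<Rightarrow> ('g, 'b) spoly" where
  "spoly_act act t p = Poly_Mapping.map (act (0, t)) (Poly_Mapping.map_key (shift_mon (- t)) p)"

definition spoly_eval :: "(int \<times> 'g::ab_group_add \<Rightarrow> 'b::comm_ring_1 \<Rightarrow> 'b) \<Rightarrow> (nat \<Rightarrow> 'b) \<Rightarrow> ('g, 'b) spoly \<Rightarrow> 'b" where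
  "spoly_eval act a p = (\<Sum>m\<in>Poly_Mapping.keys p. Poly_Mapping.lookup p m * (\<Prod>v\<in>Poly_Mapping.keys m. act (0, fst v) (a (snd v)) ^ Poly_Mapping.lookup m v))"

definition points :: "'b::zero set \<Rightarrow> nat \<Rightarrow> (nat \<Rightarrow> 'b) set" where
  "points C n = {a. (\<forall>i<n. a i \<in> C) \<and> (\<forall>i\<ge>n. a i = 0)}"

definition zero_set :: "(int \<times> 'g::ab_group_add \<Rightarrow> 'b::comm_ring_1 \<Rightarrow> 'b) \<Rightarrow> 'b set \<Rightarrow> nat \<Rightarrow> ('g, 'b) spoly set \<Rightarrow> (nat \<Rightarrow> 'b) set" where
  "zero_set act C n E = {a \<in> points C n. \<forall>f\<in>E. spoly_eval act a f = 0}"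

definition vanishing_ideal :: "(int \<times> 'g::ab_group_add \<Rightarrow> 'b::comm_ring_1 \<Rightarrow> 'b) \<Rightarrow> 'b set \<Rightarrow> nat \<Rightarrow> (nat \<Rightarrow> 'b) set \<Rightarrow> ('g, 'b) spoly set" where
  "vanishing_ideal act C n X = {f \<in> spoly_ring C n. \<forall>a\<in>X. spoly_eval act a f = 0}"

definition radical_in :: "('g, 'b::comm_ring_1) spoly set \<Rightarrow> ('g, 'b) spoly set \<Rightarrow> ('g, 'b) spoly set" where
  "radical_in R I = {f \<in> R. \<exists>k. f ^ k \<in> I}"

definition Sigma1_ideal :: "(int \<times> 'g::ab_group_add \<Rightarrow> 'b::comm_ring_1 \<Rightarrow> 'b) \<Rightarrow> 'b set \<Rightarrow> nat \<Rightarrow> ('g, 'b) spoly set \<Rightarrow> bool" where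
  "Sigma1_ideal act C n I \<longleftrightarrow> is_ideal_in (spoly_ring C n) I \<and> (\<forall>t. \<forall>f\<in>I. spoly_act act t f \<in> I)"

definition Sigma1_closed :: "(int \<times> 'g::ab_group_add \<Rightarrow> 'b::comm_ring_1 \<Rightarrow> 'b) \<Rightarrow> 'b set \<Rightarrow> bool" where
  "Sigma1_closed act C \<longleftrightarrow> pseudofield act Sigma1 C \<and>
     (\<forall>n I. Sigma1_ideal act C n I \<longrightarrow>
        radical_in (spoly_ring C n) I = vanishing_ideal act C n (zero_set act C n I))"

section \<open>Tensor product L \<otimes>_{C_L} C as free abelian group on L \<times> C modulo relations\<close>

inductive_set tensor_rel :: "'b::comm_ring_1 set \<Rightarrow> 'b set \<Rightarrow> 'b set \<Rightarrow> (('b \<times> 'b) \<Rightarrow>\<^sub>0 int) set"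
  for L K C where
  zero: "0 \<in> tensor_rel L K C"
| add: "x \<in> tensor_rel L K C \<Longrightarrow> y \<in> tensor_rel L K C \<Longrightarrow> x + y \<in> tensor_rel L K C"
| neg: "x \<in> tensor_rel L K C \<Longrightarrow> - x \<in> tensor_rel L K C"
| add_left: "l \<in> L \<Longrightarrow> l' \<in> L \<Longrightarrow> c \<in> C \<Longrightarrow>
     frag_of (l + l', c) - frag_of (l, c) - frag_of (l', c) \<in> tensor_rel L K C"
| add_right: "l \<in> L \<Longrightarrow> c \<in> C \<Longrightarrow> c' \<in> C \<Longrightarrow>
     frag_of (l, c + c') - frag_of (l, c) - frag_of (l, c') \<in> tensor_rel L K C"
| scalar: "l \<in> L \<Longrightarrow> c \<in> C \<Longrightarrow> k \<in> K \<Longrightarrow>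
     frag_of (l * k, c) - frag_of (l, k * c) \<in> tensor_rel L K C"

text \<open>formal sums with support in L \<times> C, i.e. representatives of elements of the tensor product\<close>
definition tensor_reps :: "'b::zero set \<Rightarrow> 'b set \<Rightarrow> (('b \<times> 'b) \<Rightarrow>\<^sub>0 int) set" where
  "tensor_reps L C = {x. Poly_Mapping.keys x \<subseteq> L \<times> C}"

definition mult_map :: "(('b::comm_ring_1 \<times> 'b) \<Rightarrow>\<^sub>0 int) \<Rightarrow> 'b" where
  "mult_map x = (\<Sum>p\<in>Poly_Mapping.keys x. of_int (Poly_Mapping.lookup x p) * fst p * snd p)"

definition tensor_mult_injective :: "'b::comm_ring_1 set \<Rightarrow> 'b set \<Rightarrow> 'b set \<Rightarrow> bool" where
  "tensor_mult_injective L K C \<longleftrightarrow>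
     (\<forall>x\<in>tensor_reps L C. mult_map x = 0 \<longrightarrow> x \<in> tensor_rel L K C)"

end

theory Submission
  imports Defs
begin


lemma subring_zero: "is_subring R \<Longrightarrow> 0 \<in> R" by (simp add: is_subring_def)
lemma subring_one: "is_subring R \<Longrightarrow> 1 \<in> R" by (simp add: is_subring_def)
lemma subring_add: "is_subring R \<Longrightarrow> x \<in> R \<Longrightarrow> y \<in> R \<Longrightarrow> x + y \<in> R" by (simp add: is_subring_def)
lemma subring_mult: "is_subring R \<Longrightarrow> x \<in> R \<Longrightarrow> y \<in> R \<Longrightarrow> x * y \<in> R" by (simp add: is_subring_def)
lemma subring_uminus: "is_subring R \<Longrightarrow> x \<in> R \<Longrightarrow> - x \<in> R" by (simp add: is_subring_def)
lemma subring_diff: "is_subring R \<Longrightarrow> x \<in> R \<Longrightarrow> y \<in> R \<Longrightarrow> x - y \<in> R"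
  using subring_add[of R x "-y"] subring_uminus[of R y] by simp

lemma subring_sum: "is_subring R \<Longrightarrow> (\<And>i. i \<in> A \<Longrightarrow> f i \<in> R) \<Longrightarrow> sum f A \<in> R"
  by (induction A rule: infinite_finite_induct) (auto intro: subring_zero subring_add)

lemma subring_prod: "is_subring R \<Longrightarrow> (\<And>i. i \<in> A \<Longrightarrow> f i \<in> R) \<Longrightarrow> prod f A \<in> R"
  by (induction A rule: infinite_finite_induct) (auto intro: subring_one subring_mult)

lemma subring_of_int: "is_subring R \<Longrightarrow> of_int n \<in> R"
proof (induction n rule: int_induct[where k=0])
  case base then show ?case by (simp add: subring_zero)
next
  case (step1 i) then show ?case by (simp add: subring_add subring_one)
next
  case (step2 i) then show ?case by (simp add: subring_diff subring_one)
qed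

lemma rel_diff: "x \<in> tensor_rel L K C \<Longrightarrow> y \<in> tensor_rel L K C \<Longrightarrow> x - y \<in> tensor_rel L K C"
  using tensor_rel.add[OF _ tensor_rel.neg[of y]] by (simp add: tensor_rel.neg)

lemma rel_sum: "(\<And>i. i \<in> A \<Longrightarrow> f i \<in> tensor_rel L K C) \<Longrightarrow> sum f A \<in> tensor_rel L K C"
  by (induction A rule: infinite_finite_induct) (auto intro: tensor_rel.zero tensor_rel.add)

lemma rel_cong: "x - y \<in> tensor_rel L K C \<Longrightarrow> y \<in> tensor_rel L K C \<Longrightarrow> x \<in> tensor_rel L K C"
  using tensor_rel.add[of "x - y" L K C y] by simp

lemma frag_zero_l:
  assumes "0 \<in> L" "c \<in> C" shows "frag_of (0, c) \<in> tensor_rel L K C"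
proof -
  have "frag_of (0 + 0, c) - frag_of (0, c) - frag_of (0, c) \<in> tensor_rel L K C"
    using assms by (intro tensor_rel.add_left) auto
  then have "- frag_of (0, c) \<in> tensor_rel L K C" by simp
  from tensor_rel.neg[OF this] show ?thesis by simp
qed

lemma frag_zero_r:
  assumes "l \<in> L" "0 \<in> C" shows "frag_of (l, 0) \<in> tensor_rel L K C"
proof -
  have "frag_of (l, 0 + 0) - frag_of (l, 0) - frag_of (l, 0) \<in> tensor_rel L K C"
    using assms by (intro tensor_rel.add_right) auto
  then have "- frag_of (l, 0) \<in> tensor_rel L K C" by simp
  from tensor_rel.neg[OF this] show ?thesis by simp
qed

lemma frag_sum_l:
  assumes L: "is_subring L" and "c \<in> C" and "0 \<in> C"
  shows "(\<And>i. i \<in> A \<Longrightarrow> f i \<in> L) \<Longrightarrow>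
    frag_of (sum f A, c) - (\<Sum>i\<in>A. frag_of (f i, c)) \<in> tensor_rel L K C"
proof (induction A rule: infinite_finite_induct)
  case (infinite A) then show ?case using frag_zero_l[OF subring_zero[OF L] \<open>c \<in> C\<close>] by simp
next
  case empty then show ?case using frag_zero_l[OF subring_zero[OF L] \<open>c \<in> C\<close>] by simp
next
  case (insert x F)
  have sF: "sum f F \<in> L" using insert by (intro subring_sum[OF L]) auto
  have a: "frag_of (f x + sum f F, c) - frag_of (f x, c) - frag_of (sum f F, c) \<in> tensor_rel L K C"
    using insert sF \<open>c \<in> C\<close> by (intro tensor_rel.add_left) auto
  have b: "frag_of (sum f F, c) - (\<Sum>i\<in>F. frag_of (f i, c)) \<in> tensor_rel L K C"
    using insert by auto
  have "frag_of (sum f (insert x F), c) - (\<Sum>i\<in>insert x F. frag_of (f i, c)) =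
     (frag_of (f x + sum f F, c) - frag_of (f x, c) - frag_of (sum f F, c)) +
     (frag_of (sum f F, c) - (\<Sum>i\<in>F. frag_of (f i, c)))"
    using insert by (simp add: algebra_simps)
  then show ?case using tensor_rel.add[OF a b] by simp
qed

lemma frag_sum_r:
  assumes C: "is_subring C" and "l \<in> L"
  shows "(\<And>i. i \<in> A \<Longrightarrow> f i \<in> C) \<Longrightarrow>
    frag_of (l, sum f A) - (\<Sum>i\<in>A. frag_of (l, f i)) \<in> tensor_rel L K C"
proof (induction A rule: infinite_finite_induct)
  case (infinite A) then show ?case using frag_zero_r[OF \<open>l \<in> L\<close> subring_zero[OF C]] by simp
next
  case empty then show ?case using frag_zero_r[OF \<open>l \<in> L\<close> subring_zero[OF C]] by simp
next
  case (insert x F)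
  have sF: "sum f F \<in> C" using insert by (intro subring_sum[OF C]) auto
  have a: "frag_of (l, f x + sum f F) - frag_of (l, f x) - frag_of (l, sum f F) \<in> tensor_rel L K C"
    using insert sF \<open>l \<in> L\<close> by (intro tensor_rel.add_right) auto
  have b: "frag_of (l, sum f F) - (\<Sum>i\<in>F. frag_of (l, f i)) \<in> tensor_rel L K C"
    using insert by auto
  have "frag_of (l, sum f (insert x F)) - (\<Sum>i\<in>insert x F. frag_of (l, f i)) =
     (frag_of (l, f x + sum f F) - frag_of (l, f x) - frag_of (l, sum f F)) +
     (frag_of (l, sum f F) - (\<Sum>i\<in>F. frag_of (l, f i)))"
    using insert by (simp add: algebra_simps)
  then show ?case using tensor_rel.add[OF a b] by simp
qed

lemma frag_cmul_rel:
  assumes L: "is_subring L" and "l \<in> L" "c \<in> C"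
  shows "frag_cmul n (frag_of (l, c)) - frag_of (of_int n * l, c) \<in> tensor_rel L K C"
proof (induction n rule: int_induct[where k=0])
  case base then show ?case using frag_zero_l[OF subring_zero[OF L] \<open>c \<in> C\<close>, of K]
    by (simp add: tensor_rel.neg)
next
  case (step1 i)
  have il: "of_int i * l \<in> L" using assms by (intro subring_mult subring_of_int) auto
  have a: "frag_of (of_int i * l + l, c) - frag_of (of_int i * l, c) - frag_of (l, c) \<in> tensor_rel L K C"
    using assms il by (intro tensor_rel.add_left) auto
  have "frag_cmul (i + 1) (frag_of (l, c)) - frag_of (of_int (i + 1) * l, c) =
    (frag_cmul i (frag_of (l, c)) - frag_of (of_int i * l, c)) -
    (frag_of (of_int i * l + l, c) - frag_of (of_int i * l, c) - frag_of (l, c))"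
    by (simp add: frag_cmul_distrib algebra_simps)
  then show ?case using rel_diff[OF step1(2) a] by simp
next
  case (step2 i)
  have il: "of_int (i - 1) * l \<in> L" using assms by (intro subring_mult subring_of_int) auto
  have eq: "of_int (i - 1) * l + l = of_int i * l" by (simp add: algebra_simps)
  have a: "frag_of (of_int (i - 1) * l + l, c) - frag_of (of_int (i - 1) * l, c) - frag_of (l, c) \<in> tensor_rel L K C"
    using assms il by (intro tensor_rel.add_left) auto
  have cm: "frag_cmul (i - 1) (frag_of (l, c)) = frag_cmul i (frag_of (l, c)) - frag_of (l, c)"
    by (simp add: frag_cmul_diff_distrib)
  have "\<And>X Y Z W :: ('b \<times> 'b) \<Rightarrow>\<^sub>0 int. X - W - Z = (X - Y) + (Y - Z - W)"
    by (simp add: algebra_simps)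
  then have "frag_cmul (i - 1) (frag_of (l, c)) - frag_of (of_int (i - 1) * l, c) =
    (frag_cmul i (frag_of (l, c)) - frag_of (of_int i * l, c)) +
    (frag_of (of_int (i - 1) * l + l, c) - frag_of (of_int (i - 1) * l, c) - frag_of (l, c))"
    unfolding cm eq by metis
  then show ?case using tensor_rel.add[OF step2(2) a] by metis
qed



lemma idl_sub: "is_ideal_in R I \<Longrightarrow> x \<in> I \<Longrightarrow> x \<in> R" by (auto simp: is_ideal_in_def)
lemma idl_0: "is_ideal_in R I \<Longrightarrow> 0 \<in> I" by (auto simp: is_ideal_in_def)
lemma idl_add: "is_ideal_in R I \<Longrightarrow> x \<in> I \<Longrightarrow> y \<in> I \<Longrightarrow> x + y \<in> I" by (auto simp: is_ideal_in_def)
lemma idl_mult: "is_ideal_in R I \<Longrightarrow> r \<in> R \<Longrightarrow> x \<in> I \<Longrightarrow> r * x \<in> I" by (auto simp: is_ideal_in_def)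
lemma idl_mult_r: "is_ideal_in R I \<Longrightarrow> r \<in> R \<Longrightarrow> x \<in> I \<Longrightarrow> x * r \<in> I"
  using idl_mult[of R I r x] by (simp add: mult.commute)
lemma idl_neg: "is_subring R \<Longrightarrow> is_ideal_in R I \<Longrightarrow> x \<in> I \<Longrightarrow> - x \<in> I"
  using idl_mult[of R I "-1" x] subring_uminus[OF _ subring_one, of R] by simp
lemma idl_diff: "is_subring R \<Longrightarrow> is_ideal_in R I \<Longrightarrow> x \<in> I \<Longrightarrow> y \<in> I \<Longrightarrow> x - y \<in> I"
  using idl_add[of R I x "-y"] idl_neg[of R I y] by simp
lemma idl_sum: "is_ideal_in R I \<Longrightarrow> (\<And>i. i \<in> A \<Longrightarrow> f i \<in> I) \<Longrightarrow> sum f A \<in> I"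
  by (induction A rule: infinite_finite_induct) (auto intro: idl_0 idl_add)

lemma idl_prod:
  assumes "is_subring R" "is_ideal_in R I" "finite A" "j \<in> A" "f j \<in> I" "\<And>i. i \<in> A \<Longrightarrow> f i \<in> R"
  shows "prod f A \<in> I"
proof -
  have "prod f A = f j * prod f (A - {j})" using assms(3,4) by (simp add: prod.remove)
  moreover have "prod f (A - {j}) \<in> R" using assms by (intro subring_prod) auto
  ultimately show ?thesis using idl_mult_r[OF assms(2) _ assms(5)] by simp
qed

lemma idl_one_prod:
  assumes R: "is_subring R" and I: "is_ideal_in R I"
  shows "(\<And>i. i \<in> A \<Longrightarrow> f i \<in> R \<and> 1 - f i \<in> I) \<Longrightarrow> 1 - prod f A \<in> I"
proof (induction A rule: infinite_finite_induct)
  case (infinite A) then show ?case using idl_0[OF I] by simp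
next
  case empty then show ?case using idl_0[OF I] by simp
next
  case (insert x F)
  have eq: "1 - prod f (insert x F) = (1 - f x) + f x * (1 - prod f F)"
    using insert by (simp add: algebra_simps)
  have b: "f x * (1 - prod f F) \<in> I" using insert by (intro idl_mult[OF I]) auto
  have a: "1 - f x \<in> I" using insert by auto
  show ?case by (subst eq) (rule idl_add[OF I a b])
qed

locale cor_setup =
  fixes act :: "int \<times> 'g::{finite, ab_group_add} \<Rightarrow> 'b::comm_ring_1 \<Rightarrow> 'b"
    and L C :: "'b set"
  assumes ra: "ring_action act" and Lsub: "is_subring L" and Lstab: "stable act UNIV L"
    and Lsimp: "act_simple act UNIV L"
    and Csub: "is_subring C" and Cinv: "C \<subseteq> invariants act UNIV" and KC: "invariants act L \<subseteq> C"
begin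

lemma act0[simp]: "act 0 x = x" using ra unfolding ring_action_def by blast
lemma act_comp: "act g (act h x) = act (g + h) x" using ra unfolding ring_action_def by metis
lemma act_add[simp]: "act g (x + y) = act g x + act g y" using ra unfolding ring_action_def by blast
lemma act_mult[simp]: "act g (x * y) = act g x * act g y" using ra unfolding ring_action_def by blast
lemma act_one[simp]: "act g 1 = 1" using ra unfolding ring_action_def by blast
lemma act_zero[simp]: "act g 0 = 0"
  using act_add[of g 0 0] by simp
lemma act_minus[simp]: "act g (- x) = - act g x"
  using act_add[of g x "-x"] by (simp add: eq_neg_iff_add_eq_0 add.commute)
lemma act_diff[simp]: "act g (x - y) = act g x - act g y"
  using act_add[of g x "-y"] by simp
lemma act_sum: "act g (sum f A) = (\<Sum>i\<in>A. act g (f i))"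
  by (induction A rule: infinite_finite_induct) auto
lemma act_inv[simp]: "act (- g) (act g x) = x" by (simp add: act_comp)
lemma act_inv'[simp]: "act g (act (- g) x) = x" by (simp add: act_comp)
lemma act_inv0[simp]: "act (0, t) (act (0, - t) x) = x"
  by (simp add: act_comp zero_prod_def[symmetric])
lemma act_inv0'[simp]: "act (0, - t) (act (0, t) x) = x"
  by (simp add: act_comp zero_prod_def[symmetric])
lemma actL: "x \<in> L \<Longrightarrow> act g x \<in> L" using Lstab unfolding stable_def by blast
lemma act00[simp]: "act (0, 0) x = x" using act0[of x] by (simp add: zero_prod_def)

lemma sig_fix:
  assumes "act sigma c = c" shows "act (m, 0) c = c"
proof -
  have s1: "act (1, 0) c = c" using assms by (simp add: sigma_def)
  have s2: "act (-1, 0) c = c"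
  proof -
    have "act (-1, 0) c = act (-1, 0) (act (1, 0) c)" using s1 by simp
    also have "\<dots> = c" by (simp add: act_comp)
    finally show ?thesis .
  qed
  show ?thesis
  proof (induction m rule: int_induct[where k=0])
    case base then show ?case by (simp add: zero_prod_def)
  next
    case (step1 i)
    have "act (i + 1, 0) c = act (1, 0) (act (i, 0) c)" by (simp add: act_comp add.commute)
    then show ?case using step1 s1 by simp
  next
    case (step2 i)
    have "act (i - 1, 0) c = act (-1, 0) (act (i, 0) c)" by (simp add: act_comp)
    then show ?case using step2 s2 by simp
  qed
qed

lemma C_fix: "c \<in> C \<Longrightarrow> act (m, 0) c = c"
  using Cinv sig_fix by (auto simp: invariants_def)

definition sideal :: "'b set \<Rightarrow> bool" where
  "sideal I \<longleftrightarrow> is_ideal_in L I \<and> (\<forall>m. \<forall>x\<in>I. act (m, 0) x \<in> I)"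

definition AA :: "'b set set" where "AA = {I. sideal I \<and> 1 \<notin> I}"

lemma L_nontriv: "(1::'b) \<noteq> 0"
proof
  assume "(1::'b) = 0"
  then have "\<forall>x::'b. x = 0" by (metis mult_1 mult_zero_left)
  then show False using Lsimp subring_zero[OF Lsub] by (auto simp: act_simple_def)
qed

lemma zero_in_AA: "{0} \<in> AA"
  using L_nontriv Lsub by (auto simp: AA_def sideal_def is_ideal_in_def subring_zero)

lemma exists_max: "\<exists>M\<in>AA. \<forall>X\<in>AA. M \<subseteq> X \<longrightarrow> X = M"
proof (rule subset_Zorn_nonempty)
  show "AA \<noteq> {}" using zero_in_AA by blast
next
  fix CC assume ne: "CC \<noteq> {}" and ch: "subset.chain AA CC"
  have sub: "CC \<subseteq> AA" and lin: "\<And>X Y. X \<in> CC \<Longrightarrow> Y \<in> CC \<Longrightarrow> X \<subseteq> Y \<or> Y \<subseteq> X"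
    using ch by (auto simp: subset.chain_def)
  have mem: "\<And>X. X \<in> CC \<Longrightarrow> sideal X \<and> 1 \<notin> X" using sub by (auto simp: AA_def)
  show "\<Union>CC \<in> AA"
    unfolding AA_def sideal_def is_ideal_in_def
  proof (intro CollectI conjI ballI allI)
    show "\<Union>CC \<subseteq> L" using mem unfolding sideal_def is_ideal_in_def by blast
    show "0 \<in> \<Union>CC" using mem ne by (auto simp: sideal_def is_ideal_in_def)
    show "1 \<notin> \<Union>CC" using mem by auto
  next
    fix x y assume "x \<in> \<Union>CC" "y \<in> \<Union>CC"
    then obtain X Y where X: "X \<in> CC" "x \<in> X" and Y: "Y \<in> CC" "y \<in> Y" by auto
    show "x + y \<in> \<Union>CC"
    proof (cases "X \<subseteq> Y")
      case True then have "x + y \<in> Y" using X Y mem[of Y] by (auto simp: sideal_def is_ideal_in_def)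
      then show ?thesis using Y by blast
    next
      case False then have "Y \<subseteq> X" using lin X Y by blast
      then have "x + y \<in> X" using X Y mem[of X] by (auto simp: sideal_def is_ideal_in_def)
      then show ?thesis using X by blast
    qed
  next
    fix r x assume "r \<in> L" "x \<in> \<Union>CC"
    then obtain X where "X \<in> CC" "x \<in> X" by auto
    then have "r * x \<in> X" using mem[of X] \<open>r \<in> L\<close> by (auto simp: sideal_def is_ideal_in_def)
    then show "r * x \<in> \<Union>CC" using \<open>X \<in> CC\<close> by blast
  next
    fix m x assume "x \<in> \<Union>CC"
    then show "act (m, 0) x \<in> \<Union>CC" using mem by (auto simp: sideal_def)
  qed
qed

definition T :: "'g \<Rightarrow> 'b set \<Rightarrow> 'b set" where "T t I = act (0, t) ` I"

lemma T_AA: assumes "I \<in> AA" shows "T t I \<in> AA"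
proof -
  have I: "is_ideal_in L I" "\<And>m x. x \<in> I \<Longrightarrow> act (m, 0) x \<in> I" "1 \<notin> I"
    using assms by (auto simp: AA_def sideal_def)
  have "is_ideal_in L (T t I)"
    unfolding is_ideal_in_def T_def
  proof (intro conjI ballI)
    show "act (0, t) ` I \<subseteq> L" using I(1) actL idl_sub by blast
    show "0 \<in> act (0, t) ` I" using idl_0[OF I(1)] by (metis act_zero image_eqI)
  next
    fix x y assume "x \<in> act (0, t) ` I" "y \<in> act (0, t) ` I"
    then show "x + y \<in> act (0, t) ` I" using idl_add[OF I(1)]
      by (auto simp del: act_add simp add: act_add[symmetric])
  next
    fix r x assume r: "r \<in> L" and "x \<in> act (0, t) ` I"
    then obtain z where z: "z \<in> I" "x = act (0, t) z" by auto
    have "r * x = act (0, t) (act (- (0, t)) r * z)" using z by simp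
    moreover have "act (- (0, t)) r * z \<in> I" using idl_mult[OF I(1) actL[OF r] z(1)] .
    ultimately show "r * x \<in> act (0, t) ` I" by blast
  qed
  moreover have "\<forall>m. \<forall>x\<in>T t I. act (m, 0) x \<in> T t I"
  proof (intro allI ballI)
    fix m x assume "x \<in> T t I"
    then obtain z where z: "z \<in> I" "x = act (0, t) z" by (auto simp: T_def)
    have "act (m, 0) x = act (0, t) (act (m, 0) z)" using z by (simp add: act_comp add.commute)
    then show "act (m, 0) x \<in> T t I" using I(2)[OF z(1)] by (auto simp: T_def)
  qed
  moreover have "1 \<notin> T t I"
  proof
    assume "1 \<in> T t I"
    then obtain z where z: "z \<in> I" "1 = act (0, t) z" by (auto simp: T_def)
    then have "z = act (0, - t) 1" by (metis act_inv0')
    then show False using z I(3) by simp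
  qed
  ultimately show ?thesis by (auto simp: AA_def sideal_def)
qed

lemma T_T: "T (- t) (T t I) = I"
proof -
  have "act (0, - t) (act (0, t) x) = x" for x using act_inv[of "(0, t)" x] by simp
  then show ?thesis unfolding T_def image_image by simp
qed

lemma T_mono: "I \<subseteq> J \<Longrightarrow> T t I \<subseteq> T t J" by (auto simp: T_def)

end



context cor_setup begin

definition MM where "MM = (SOME M. M \<in> AA \<and> (\<forall>X\<in>AA. M \<subseteq> X \<longrightarrow> X = M))"

lemma MM: "MM \<in> AA" "\<And>X. X \<in> AA \<Longrightarrow> MM \<subseteq> X \<Longrightarrow> X = MM"
proof -
  have ex: "\<exists>M. M \<in> AA \<and> (\<forall>X\<in>AA. M \<subseteq> X \<longrightarrow> X = M)" using exists_max by blast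
  show "MM \<in> AA" using someI_ex[OF ex] unfolding MM_def by blast
  show "\<And>X. X \<in> AA \<Longrightarrow> MM \<subseteq> X \<Longrightarrow> X = MM" using someI_ex[OF ex] unfolding MM_def by blast
qed

definition PP where "PP = range (\<lambda>t. T t MM)"

lemma PP_fin: "finite PP" unfolding PP_def by simp

lemma PP_AA: "p \<in> PP \<Longrightarrow> p \<in> AA" using T_AA MM(1) by (auto simp: PP_def)

lemma PP_max: assumes "p \<in> PP" "X \<in> AA" "p \<subseteq> X" shows "X = p"
proof -
  obtain t where p: "p = T t MM" using assms(1) by (auto simp: PP_def)
  have "MM = T (- t) p" using p T_T by simp
  also have "\<dots> \<subseteq> T (- t) X" using assms(3) by (rule T_mono)
  finally have "T (- t) X = MM" using MM(2) T_AA[OF assms(2)] by blast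
  then have "T (- (- t)) (T (- t) X) = T t MM" by simp
  then show ?thesis using T_T[of "- t" X] p by simp
qed

lemma PP_ideal: "p \<in> PP \<Longrightarrow> is_ideal_in L p" using PP_AA by (auto simp: AA_def sideal_def)
lemma PP_stab: "p \<in> PP \<Longrightarrow> x \<in> p \<Longrightarrow> act (m, 0) x \<in> p" using PP_AA by (auto simp: AA_def sideal_def)
lemma PP_one: "p \<in> PP \<Longrightarrow> 1 \<notin> p" using PP_AA by (auto simp: AA_def sideal_def)
lemma PP_sideal: "p \<in> PP \<Longrightarrow> sideal p" using PP_AA by (auto simp: AA_def)

lemma MM_PP: "MM \<in> PP"
proof -
  have "T 0 MM = MM" by (simp add: T_def)
  then show ?thesis unfolding PP_def by (metis rangeI)
qed

lemma PP_zero: assumes "\<And>p. p \<in> PP \<Longrightarrow> x \<in> p" shows "x = 0"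
proof -
  define Z where "Z = \<Inter>PP"
  have ne: "PP \<noteq> {}" using MM_PP by blast
  have idZ: "is_ideal_in L Z"
    unfolding is_ideal_in_def Z_def
  proof (intro conjI ballI)
    show "\<Inter>PP \<subseteq> L" using MM_PP PP_ideal idl_sub by blast
    show "0 \<in> \<Inter>PP" using PP_ideal idl_0 by blast
  next
    fix a b assume "a \<in> \<Inter>PP" "b \<in> \<Inter>PP" then show "a + b \<in> \<Inter>PP" using PP_ideal idl_add by blast
  next
    fix r a assume "r \<in> L" "a \<in> \<Inter>PP" then show "r * a \<in> \<Inter>PP" using PP_ideal idl_mult by blast
  qed
  have stZ: "stable act UNIV Z"
    unfolding stable_def
  proof (intro ballI)
    fix g :: "int \<times> 'g" and a assume a: "a \<in> Z"
    obtain n t' where g: "g = (n, t')" by force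
    show "act g a \<in> Z" unfolding Z_def
    proof
      fix p assume "p \<in> PP"
      then obtain t where p: "p = T t MM" by (auto simp: PP_def)
      have q: "T (t - t') MM \<in> PP" by (auto simp: PP_def)
      have "act (n, 0) a \<in> T (t - t') MM" using a q PP_stab unfolding Z_def by blast
      then obtain z where z: "z \<in> MM" "act (n, 0) a = act (0, t - t') z" by (auto simp: T_def)
      have "act g a = act (0, t') (act (n, 0) a)" using g by (simp add: act_comp)
      also have "\<dots> = act (0, t) z" using z by (simp add: act_comp)
      finally show "act g a \<in> p" using z p by (auto simp: T_def)
    qed
  qed
  have "Z \<noteq> L"
  proof
    assume "Z = L"
    then have "1 \<in> MM" using subring_one[OF Lsub] MM_PP unfolding Z_def by blast
    then show False using MM(1) by (auto simp: AA_def)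
  qed
  then have "Z = {0}" using Lsimp idZ stZ by (auto simp: act_simple_def)
  moreover have "x \<in> Z" using assms unfolding Z_def by blast
  ultimately show ?thesis by simp
qed

lemma comax:
  assumes J: "sideal J" and p: "p \<in> PP" and nsub: "\<not> J \<subseteq> p"
  shows "\<exists>j\<in>J. \<exists>a\<in>p. j + a = 1"
proof (rule ccontr)
  assume nex: "\<not> ?thesis"
  define S where "S = {j + a | j a. j \<in> J \<and> a \<in> p}"
  have Ji: "is_ideal_in L J" "\<And>m x. x \<in> J \<Longrightarrow> act (m, 0) x \<in> J" using J by (auto simp: sideal_def)
  have pi: "is_ideal_in L p" using PP_ideal[OF p] .
  have "is_ideal_in L S" unfolding is_ideal_in_def
  proof (intro conjI ballI)
    show "S \<subseteq> L" unfolding S_def using idl_sub[OF Ji(1)] idl_sub[OF pi] subring_add[OF Lsub] by blast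
    show "0 \<in> S" unfolding S_def using idl_0[OF Ji(1)] idl_0[OF pi] by force
  next
    fix x y assume "x \<in> S" "y \<in> S"
    then obtain j1 a1 j2 a2 where "x = j1 + a1" "y = j2 + a2" "j1 \<in> J" "a1 \<in> p" "j2 \<in> J" "a2 \<in> p"
      unfolding S_def by blast
    moreover have "x + y = (j1 + j2) + (a1 + a2)" using calculation by (simp add: algebra_simps)
    ultimately show "x + y \<in> S" unfolding S_def using idl_add[OF Ji(1)] idl_add[OF pi] by blast
  next
    fix r x assume r: "r \<in> L" and "x \<in> S"
    then obtain j a where "x = j + a" "j \<in> J" "a \<in> p" unfolding S_def by blast
    moreover have "r * x = r * j + r * a" using calculation by (simp add: algebra_simps)
    ultimately show "r * x \<in> S" unfolding S_def using idl_mult[OF Ji(1) r] idl_mult[OF pi r] by blast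
  qed
  moreover have "\<forall>m. \<forall>x\<in>S. act (m, 0) x \<in> S"
  proof (intro allI ballI)
    fix m x assume "x \<in> S"
    then obtain j a where "x = j + a" "j \<in> J" "a \<in> p" unfolding S_def by blast
    moreover have "act (m, 0) x = act (m, 0) j + act (m, 0) a" using calculation by simp
    ultimately show "act (m, 0) x \<in> S" unfolding S_def using Ji(2) PP_stab[OF p] by blast
  qed
  moreover have "1 \<notin> S" using nex unfolding S_def by (smt (verit) mem_Collect_eq)
  ultimately have "S \<in> AA" by (auto simp: AA_def sideal_def)
  moreover have "p \<subseteq> S" unfolding S_def using idl_0[OF Ji(1)] by force
  ultimately have "S = p" using PP_max[OF p] by blast
  moreover have "J \<subseteq> S" unfolding S_def using idl_0[OF pi] by force
  ultimately show False using nsub by blast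
qed

lemma bb_ex: assumes "p \<in> PP" "q \<in> PP" "q \<noteq> p" shows "\<exists>b. b \<in> q \<and> 1 - b \<in> p"
proof -
  have "\<not> q \<subseteq> p" using PP_max[OF assms(2) PP_AA[OF assms(1)]] assms(3) by blast
  then obtain j a where "j \<in> q" "a \<in> p" "j + a = 1" using comax[OF PP_sideal[OF assms(2)] assms(1)] by blast
  then show ?thesis by (metis add_diff_cancel_left')
qed

definition bb where "bb p q = (SOME b. b \<in> q \<and> 1 - b \<in> p)"

lemma bb: assumes "p \<in> PP" "q \<in> PP" "q \<noteq> p" shows "bb p q \<in> q" "1 - bb p q \<in> p"
  using someI_ex[OF bb_ex[OF assms]] unfolding bb_def by blast+

definition E where "E p = prod (bb p) (PP - {p})"

lemma E_L: "p \<in> PP \<Longrightarrow> E p \<in> L"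
  unfolding E_def using bb(1) PP_ideal idl_sub by (intro subring_prod[OF Lsub]) blast

lemma E_in: "p \<in> PP \<Longrightarrow> q \<in> PP \<Longrightarrow> q \<noteq> p \<Longrightarrow> E p \<in> q"
  unfolding E_def
  by (rule idl_prod[OF Lsub PP_ideal[of q]]) (use PP_fin bb(1) PP_ideal idl_sub in blast)+

lemma E_one: "p \<in> PP \<Longrightarrow> 1 - E p \<in> p"
  unfolding E_def
  by (rule idl_one_prod[OF Lsub PP_ideal]) (use bb PP_ideal idl_sub in blast)+

lemma E_idem: assumes p: "p \<in> PP" shows "E p * E p = E p"
proof -
  have "E p * E p - E p = 0"
  proof (rule PP_zero)
    fix q assume q: "q \<in> PP"
    have eq: "E p * E p - E p = (E p - 1) * E p" by (simp add: algebra_simps)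
    have m1: "E p - 1 \<in> L" using E_L[OF p] subring_one[OF Lsub] by (simp add: subring_diff[OF Lsub])
    show "E p * E p - E p \<in> q"
    proof (cases "q = p")
      case True
      have "E p - 1 \<in> p" using idl_neg[OF Lsub PP_ideal[OF p] E_one[OF p]] by simp
      then show ?thesis unfolding eq using True idl_mult_r[OF PP_ideal[OF p] E_L[OF p]] by blast
    next
      case False
      then show ?thesis unfolding eq using idl_mult[OF PP_ideal[OF q] m1 E_in[OF p q False]] by blast
    qed
  qed
  then show ?thesis by simp
qed

lemma E_fix: assumes p: "p \<in> PP" shows "act sigma (E p) = E p"
proof -
  have "act sigma (E p) - E p = 0"
  proof (rule PP_zero)
    fix q assume q: "q \<in> PP"
    show "act sigma (E p) - E p \<in> q"
    proof (cases "q = p")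
      case True
      have a: "act (1, 0) (1 - E p) \<in> p" using PP_stab[OF p E_one[OF p]] .
      have "act sigma (E p) - E p = (1 - E p) - act (1, 0) (1 - E p)" by (simp add: sigma_def)
      then show ?thesis using True idl_diff[OF Lsub PP_ideal[OF p] E_one[OF p] a] by simp
    next
      case False
      have "act (1, 0) (E p) \<in> q" using PP_stab[OF q E_in[OF p q False]] .
      then show ?thesis using idl_diff[OF Lsub PP_ideal[OF q] _ E_in[OF p q False]] by (simp add: sigma_def)
    qed
  qed
  then show ?thesis by simp
qed

lemma E_sum: "(\<Sum>p\<in>PP. E p) = 1"
proof -
  have "1 - (\<Sum>p\<in>PP. E p) = 0"
  proof (rule PP_zero)
    fix q assume q: "q \<in> PP"
    have eq: "1 - (\<Sum>p\<in>PP. E p) = (1 - E q) - (\<Sum>p\<in>PP - {q}. E p)"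
      using q PP_fin by (simp add: sum.remove)
    have s: "(\<Sum>p\<in>PP - {q}. E p) \<in> q"
      using E_in q by (intro idl_sum[OF PP_ideal[OF q]]) auto
    show "1 - (\<Sum>p\<in>PP. E p) \<in> q"
      by (subst eq) (rule idl_diff[OF Lsub PP_ideal[OF q] E_one[OF q] s])
  qed
  then show ?thesis by simp
qed

lemma E_simp:
  assumes p: "p \<in> PP" and J: "sideal J" and JE: "\<And>x. x \<in> J \<Longrightarrow> x * E p = x"
  shows "J \<subseteq> {0} \<or> E p \<in> J"
proof (cases "J \<subseteq> p")
  case True
  have Ji: "is_ideal_in L J" using J by (auto simp: sideal_def)
  have "x = 0" if x: "x \<in> J" for x
  proof (rule PP_zero)
    fix q assume q: "q \<in> PP"
    show "x \<in> q"
    proof (cases "q = p")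
      case True then show ?thesis using x \<open>J \<subseteq> p\<close> by blast
    next
      case False
      have "x * E p \<in> q" using idl_mult[OF PP_ideal[OF q] idl_sub[OF Ji x] E_in[OF p q False]] .
      then show ?thesis using JE[OF x] by simp
    qed
  qed
  then show ?thesis by blast
next
  case False
  have Ji: "is_ideal_in L J" using J by (auto simp: sideal_def)
  obtain j a where ja: "j \<in> J" "a \<in> p" "j + a = 1" using comax[OF J p False] by blast
  have aL: "a \<in> L" using idl_sub[OF PP_ideal[OF p] ja(2)] .
  have "a * E p = 0"
  proof (rule PP_zero)
    fix q assume q: "q \<in> PP"
    show "a * E p \<in> q"
    proof (cases "q = p")
      case True then show ?thesis using idl_mult_r[OF PP_ideal[OF p] E_L[OF p] ja(2)] by simp
    next
      case False then show ?thesis using idl_mult[OF PP_ideal[OF q] aL E_in[OF p q False]] by simp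
    qed
  qed
  moreover have "E p = j * E p + a * E p" using ja(3) by (metis distrib_right mult_1)
  ultimately have "E p = j" using JE[OF ja(1)] by simp
  then show ?thesis using ja(1) by simp
qed

end



context cor_setup begin

definition dep :: "'b \<Rightarrow> 'i set \<Rightarrow> ('i \<Rightarrow> 'b) \<Rightarrow> bool" where
  "dep e A c \<longleftrightarrow> (\<exists>k j. j \<in> A \<and> k j = e \<and>
     (\<forall>i\<in>A. k i \<in> L \<and> k i * e = k i \<and> act sigma (k i) = k i) \<and> (\<Sum>i\<in>A. k i * c i) = 0)"

lemma act_sum_mult_C:
  assumes "\<And>i. i \<in> A \<Longrightarrow> c i \<in> C"
  shows "(\<Sum>i\<in>A. act (m, 0) (u i) * c i) = act (m, 0) (\<Sum>i\<in>A. u i * c i)"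
  unfolding act_sum using assms C_fix by (intro sum.cong) auto

lemma Q_lemma:
  assumes eL: "e \<in> L" and efix: "act sigma e = e"
    and esimp: "\<And>J. sideal J \<Longrightarrow> (\<And>x. x \<in> J \<Longrightarrow> x * e = x) \<Longrightarrow> J \<subseteq> {0} \<or> e \<in> J"
    and fin: "finite A"
  shows "(\<forall>i\<in>A. c i \<in> C) \<longrightarrow> \<not> dep e A c \<longrightarrow>
    (\<forall>u. (\<forall>i\<in>A. u i \<in> L \<and> u i * e = u i) \<longrightarrow> (\<Sum>i\<in>A. u i * c i) = 0 \<longrightarrow> (\<forall>i\<in>A. u i = 0))"
  using fin
proof (induction A rule: finite_induct)
  case empty then show ?case by simp
next
  case (insert j B)
  have efixm: "act (m, 0) e = e" for m using sig_fix[OF efix] .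
  show ?case
  proof (intro impI allI)
    assume cC: "\<forall>i\<in>insert j B. c i \<in> C" and nd: "\<not> dep e (insert j B) c"
    fix u assume uL: "\<forall>i\<in>insert j B. u i \<in> L \<and> u i * e = u i" and us: "(\<Sum>i\<in>insert j B. u i * c i) = 0"
    have ndB: "\<not> dep e B c"
    proof
      assume "dep e B c"
      then obtain k j' where kj: "j' \<in> B" "k j' = e" "\<forall>i\<in>B. k i \<in> L \<and> k i * e = k i \<and> act sigma (k i) = k i"
        "(\<Sum>i\<in>B. k i * c i) = 0" unfolding dep_def by blast
      define k' where "k' = k(j := 0)"
      have "j' \<noteq> j" using kj(1) insert(2) by blast
      moreover have "(\<Sum>i\<in>insert j B. k' i * c i) = (\<Sum>i\<in>B. k i * c i)"
      proof -
        have "(\<Sum>i\<in>B. k' i * c i) = (\<Sum>i\<in>B. k i * c i)"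
          using insert(2) by (intro sum.cong) (auto simp: k'_def)
        moreover have "k' j = 0" by (simp add: k'_def)
        ultimately show ?thesis using insert(1,2) by simp
      qed
      ultimately have "dep e (insert j B) c" unfolding dep_def
        using kj subring_zero[OF Lsub] by (intro exI[of _ k'] exI[of _ j']) (auto simp: k'_def)
      then show False using nd by blast
    qed
    define J where "J = {x. \<exists>v. (\<forall>i\<in>insert j B. v i \<in> L \<and> v i * e = v i) \<and>
        (\<Sum>i\<in>insert j B. v i * c i) = 0 \<and> v j = x}"
    have Jsub: "\<And>x. x \<in> J \<Longrightarrow> x * e = x" unfolding J_def by auto
    have sJ: "sideal J" unfolding sideal_def is_ideal_in_def
    proof (intro conjI ballI allI)
      show "J \<subseteq> L" unfolding J_def by auto
      show "0 \<in> J" unfolding J_def using subring_zero[OF Lsub] by (intro CollectI exI[of _ "\<lambda>_. 0"]) auto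
    next
      fix x y assume "x \<in> J" "y \<in> J"
      then obtain v w where v: "\<forall>i\<in>insert j B. v i \<in> L \<and> v i * e = v i" "(\<Sum>i\<in>insert j B. v i * c i) = 0" "v j = x"
        and w: "\<forall>i\<in>insert j B. w i \<in> L \<and> w i * e = w i" "(\<Sum>i\<in>insert j B. w i * c i) = 0" "w j = y"
        unfolding J_def by blast
      have "(\<Sum>i\<in>insert j B. (v i + w i) * c i) = 0" using v(2) w(2)
        by (simp add: distrib_right sum.distrib)
      moreover have "\<forall>i\<in>insert j B. v i + w i \<in> L \<and> (v i + w i) * e = v i + w i"
        using v(1) w(1) subring_add[OF Lsub] by (simp add: distrib_right)
      ultimately show "x + y \<in> J" unfolding J_def using v(3) w(3) by (intro CollectI exI[of _ "\<lambda>i. v i + w i"]) auto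
    next
      fix r x assume r: "r \<in> L" and "x \<in> J"
      then obtain v where v: "\<forall>i\<in>insert j B. v i \<in> L \<and> v i * e = v i" "(\<Sum>i\<in>insert j B. v i * c i) = 0" "v j = x"
        unfolding J_def by blast
      have "(\<Sum>i\<in>insert j B. (r * v i) * c i) = r * (\<Sum>i\<in>insert j B. v i * c i)"
        by (simp add: sum_distrib_left mult.assoc)
      moreover have "\<forall>i\<in>insert j B. r * v i \<in> L \<and> (r * v i) * e = r * v i"
        using v(1) r subring_mult[OF Lsub] by (simp add: mult.assoc)
      ultimately show "r * x \<in> J" unfolding J_def using v(2,3) by (intro CollectI exI[of _ "\<lambda>i. r * v i"]) auto
    next
      fix m x assume "x \<in> J"
      then obtain v where v: "\<forall>i\<in>insert j B. v i \<in> L \<and> v i * e = v i" "(\<Sum>i\<in>insert j B. v i * c i) = 0" "v j = x"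
        unfolding J_def by blast
      have "(\<Sum>i\<in>insert j B. act (m, 0) (v i) * c i) = 0"
        using act_sum_mult_C[of "insert j B" c m v] cC v(2) by simp
      moreover have "\<forall>i\<in>insert j B. act (m, 0) (v i) \<in> L \<and> act (m, 0) (v i) * e = act (m, 0) (v i)"
      proof
        fix i assume "i \<in> insert j B"
        then have "v i \<in> L" "v i * e = v i" using v(1) by auto
        then show "act (m, 0) (v i) \<in> L \<and> act (m, 0) (v i) * e = act (m, 0) (v i)"
          using actL efixm[of m] by (metis act_mult)
      qed
      ultimately show "act (m, 0) x \<in> J" unfolding J_def using v(3)
        by (intro CollectI exI[of _ "\<lambda>i. act (m, 0) (v i)"]) auto
    qed
    have uB: "(\<Sum>i\<in>B. u i * c i) = 0" if "u j = 0"
      using us insert(1,2) that by simp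
    from esimp[OF sJ Jsub] show "\<forall>i\<in>insert j B. u i = 0"
    proof
      assume "J \<subseteq> {0}"
      moreover have "u j \<in> J" unfolding J_def using uL us by blast
      ultimately have uj: "u j = 0" by blast
      have "\<forall>i\<in>B. u i = 0" using insert(3) cC ndB uL uB[OF uj] by auto
      then show ?thesis using uj by auto
    next
      assume "e \<in> J"
      then obtain w where w: "\<forall>i\<in>insert j B. w i \<in> L \<and> w i * e = w i" "(\<Sum>i\<in>insert j B. w i * c i) = 0" "w j = e"
        unfolding J_def by blast
      define w' where "w' i = act sigma (w i) - w i" for i
      have w'L: "\<forall>i\<in>B. w' i \<in> L \<and> w' i * e = w' i"
      proof
        fix i assume "i \<in> B"
        then have "w i \<in> L" "w i * e = w i" using w(1) by auto
        moreover have "act sigma (w i) * e = act sigma (w i)" using calculation efix by (metis act_mult)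
        ultimately show "w' i \<in> L \<and> w' i * e = w' i" unfolding w'_def
          using actL subring_diff[OF Lsub] by (simp add: left_diff_distrib)
      qed
      have "(\<Sum>i\<in>insert j B. w' i * c i) = (\<Sum>i\<in>insert j B. act (1, 0) (w i) * c i) - (\<Sum>i\<in>insert j B. w i * c i)"
        unfolding w'_def sigma_def by (simp add: left_diff_distrib sum_subtractf)
      also have "\<dots> = 0" using act_sum_mult_C[of "insert j B" c 1 w] cC w(2) by simp
      finally have "(\<Sum>i\<in>insert j B. w' i * c i) = 0" .
      moreover have "w' j = 0" unfolding w'_def using w(3) efix by simp
      ultimately have "(\<Sum>i\<in>B. w' i * c i) = 0" using insert(1,2) by simp
      then have "\<forall>i\<in>B. w' i = 0" using insert(3) cC ndB w'L by auto
      then have "\<forall>i\<in>insert j B. act sigma (w i) = w i" using w(3) efix unfolding w'_def by auto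
      then have "dep e (insert j B) c" unfolding dep_def using w
        by (intro exI[of _ w] exI[of _ j]) auto
      then show ?thesis using nd by blast
    qed
  qed
qed

end



context cor_setup begin

abbreviation "KK \<equiv> invariants act L"

lemma K_L: "k \<in> KK \<Longrightarrow> k \<in> L" by (simp add: invariants_def)

lemma frag_scalar_sum:
  assumes lL: "l \<in> L" and k: "\<And>i. i \<in> A \<Longrightarrow> k i \<in> KK" and c: "\<And>i. i \<in> A \<Longrightarrow> c i \<in> C"
    and s: "(\<Sum>i\<in>A. k i * c i) = 0"
  shows "(\<Sum>i\<in>A. frag_of (l * k i, c i)) \<in> tensor_rel L KK C"
proof -
  have kc: "k i * c i \<in> C" if "i \<in> A" for i using k[OF that] c[OF that] KC subring_mult[OF Csub] by blast
  have a: "(\<Sum>i\<in>A. frag_of (l * k i, c i) - frag_of (l, k i * c i)) \<in> tensor_rel L KK C"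
    using lL k c by (intro rel_sum tensor_rel.scalar) auto
  have b: "frag_of (l, \<Sum>i\<in>A. k i * c i) - (\<Sum>i\<in>A. frag_of (l, k i * c i)) \<in> tensor_rel L KK C"
    using frag_sum_r[OF Csub lL, of A "\<lambda>i. k i * c i"] kc by blast
  have z: "frag_of (l, \<Sum>i\<in>A. k i * c i) \<in> tensor_rel L KK C"
    unfolding s using frag_zero_r[OF lL subring_zero[OF Csub]] .
  have "(\<Sum>i\<in>A. frag_of (l * k i, c i)) =
     (\<Sum>i\<in>A. frag_of (l * k i, c i) - frag_of (l, k i * c i)) + (frag_of (l, \<Sum>i\<in>A. k i * c i) -
      (frag_of (l, \<Sum>i\<in>A. k i * c i) - (\<Sum>i\<in>A. frag_of (l, k i * c i))))"
    by (simp add: sum_subtractf)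
  then show ?thesis using tensor_rel.add[OF a rel_diff[OF z b]] by metis
qed

lemma R_lemma:
  assumes eL: "e \<in> L" and efix: "act sigma e = e"
    and esimp: "\<And>J. sideal J \<Longrightarrow> (\<And>x. x \<in> J \<Longrightarrow> x * e = x) \<Longrightarrow> J \<subseteq> {0} \<or> e \<in> J"
    and fin: "finite A0"
  shows "\<forall>l. (\<forall>i\<in>A0. c i \<in> C) \<longrightarrow> (\<forall>i\<in>A0. l i \<in> L \<and> l i * e = l i) \<longrightarrow> (\<Sum>i\<in>A0. l i * c i) = 0 \<longrightarrow>
     (\<Sum>i\<in>A0. frag_of (l i, c i)) \<in> tensor_rel L KK C"
  using fin
proof (induction A0 rule: finite_remove_induct)
  case empty then show ?case by (simp add: tensor_rel.zero)
next
  case (remove A)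
  show ?case
  proof (intro allI impI)
    fix l assume cC: "\<forall>i\<in>A. c i \<in> C" and lL: "\<forall>i\<in>A. l i \<in> L \<and> l i * e = l i"
      and ls: "(\<Sum>i\<in>A. l i * c i) = 0"
    show "(\<Sum>i\<in>A. frag_of (l i, c i)) \<in> tensor_rel L KK C"
    proof (cases "dep e A c")
      case False
      then have "\<forall>i\<in>A. l i = 0" using Q_lemma[OF eL efix esimp remove(1)] cC lL ls by blast
      then show ?thesis using frag_zero_l[OF subring_zero[OF Lsub]] cC by (intro rel_sum) auto
    next
      case True
      then obtain k j where kj: "j \<in> A" "k j = e" "\<forall>i\<in>A. k i \<in> L \<and> k i * e = k i \<and> act sigma (k i) = k i"
        "(\<Sum>i\<in>A. k i * c i) = 0" unfolding dep_def by blast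
      have kK: "k i \<in> KK" if "i \<in> A" for i using kj(3) that by (simp add: invariants_def)
      define l' where "l' i = l i - l j * k i" for i
      have ljL: "l j \<in> L" "l j * e = l j" using lL kj(1) by auto
      have l'L: "\<forall>i\<in>A - {j}. l' i \<in> L \<and> l' i * e = l' i"
      proof
        fix i assume i: "i \<in> A - {j}"
        then have "l i \<in> L" "l i * e = l i" "k i \<in> L" "k i * e = k i" using lL kj(3) by auto
        then show "l' i \<in> L \<and> l' i * e = l' i" unfolding l'_def using ljL
          by (simp add: subring_diff[OF Lsub] subring_mult[OF Lsub] left_diff_distrib mult.assoc)
      qed
      have s1: "(\<Sum>i\<in>A. l i * c i) = l j * c j + (\<Sum>i\<in>A - {j}. l i * c i)"
        using remove(1) kj(1) by (simp add: sum.remove)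
      have s2: "(\<Sum>i\<in>A. k i * c i) = e * c j + (\<Sum>i\<in>A - {j}. k i * c i)"
        using remove(1) kj(1,2) by (simp add: sum.remove)
      have "(\<Sum>i\<in>A - {j}. l' i * c i) = (\<Sum>i\<in>A - {j}. l i * c i) - l j * (\<Sum>i\<in>A - {j}. k i * c i)"
        unfolding l'_def by (simp add: left_diff_distrib sum_subtractf sum_distrib_left mult.assoc)
      also have "\<dots> = (- (l j * c j)) - l j * (- (e * c j))"
        using s1 s2 ls kj(4) by (metis add.commute add_eq_0_iff)
      also have "\<dots> = 0" using ljL(2) by (simp add: mult.assoc[symmetric])
      finally have l's: "(\<Sum>i\<in>A - {j}. l' i * c i) = 0" .
      have IH: "(\<Sum>i\<in>A - {j}. frag_of (l' i, c i)) \<in> tensor_rel L KK C"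
        using remove(4)[OF kj(1)] cC l'L l's by blast
      have br: "(\<Sum>i\<in>A - {j}. frag_of (l i, c i) - frag_of (l' i, c i) - frag_of (l j * k i, c i)) \<in> tensor_rel L KK C"
      proof (rule rel_sum)
        fix i assume i: "i \<in> A - {j}"
        have "frag_of (l' i + l j * k i, c i) - frag_of (l' i, c i) - frag_of (l j * k i, c i) \<in> tensor_rel L KK C"
          using i l'L ljL kj(3) cC by (intro tensor_rel.add_left) (auto simp: subring_mult[OF Lsub])
        moreover have "l' i + l j * k i = l i" unfolding l'_def by simp
        ultimately show "frag_of (l i, c i) - frag_of (l' i, c i) - frag_of (l j * k i, c i) \<in> tensor_rel L KK C"
          by simp
      qed
      have sc: "(\<Sum>i\<in>A. frag_of (l j * k i, c i)) \<in> tensor_rel L KK C"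
        by (rule frag_scalar_sum[OF ljL(1) kK]) (use cC kj(4) in auto)
      have f1: "(\<Sum>i\<in>A. frag_of (l i, c i)) = frag_of (l j, c j) + (\<Sum>i\<in>A - {j}. frag_of (l i, c i))"
        using remove(1) kj(1) by (simp add: sum.remove)
      have f2: "(\<Sum>i\<in>A. frag_of (l j * k i, c i)) = frag_of (l j, c j) + (\<Sum>i\<in>A - {j}. frag_of (l j * k i, c i))"
        using remove(1) kj(1,2) ljL(2) by (simp add: sum.remove)
      have "(\<Sum>i\<in>A. frag_of (l i, c i)) =
        (\<Sum>i\<in>A - {j}. frag_of (l i, c i) - frag_of (l' i, c i) - frag_of (l j * k i, c i)) +
        (\<Sum>i\<in>A. frag_of (l j * k i, c i)) + (\<Sum>i\<in>A - {j}. frag_of (l' i, c i))"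
        unfolding f1 f2 by (simp add: sum_subtractf sum.distrib algebra_simps)
      then show ?thesis using tensor_rel.add[OF tensor_rel.add[OF br sc] IH] by metis
    qed
  qed
qed

end



context cor_setup begin

lemma main: "tensor_mult_injective L KK C"
  unfolding tensor_mult_injective_def
proof (intro ballI impI)
  fix x assume xr: "x \<in> tensor_reps L C" and mx: "mult_map x = 0"
  define A where "A = Poly_Mapping.keys x"
  have finA: "finite A" unfolding A_def by simp
  have AL: "\<And>q. q \<in> A \<Longrightarrow> fst q \<in> L \<and> snd q \<in> C" using xr unfolding tensor_reps_def A_def by auto
  define l where "l q = of_int (Poly_Mapping.lookup x q) * fst q" for q
  define c where "c q = snd q" for q :: "'b \<times> 'b"
  have lL: "l q \<in> L" if "q \<in> A" for q
    unfolding l_def using AL[OF that] by (intro subring_mult[OF Lsub] subring_of_int[OF Lsub]) auto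
  have cC: "c q \<in> C" if "q \<in> A" for q unfolding c_def using AL[OF that] by auto
  have lc: "(\<Sum>q\<in>A. l q * c q) = 0" using mx unfolding mult_map_def A_def l_def c_def by simp
  have xe: "x = (\<Sum>q\<in>A. frag_cmul (Poly_Mapping.lookup x q) (frag_of q))"
    unfolding A_def by (subst frag_expansion) (simp add: frag_extend_def)
  have d1: "x - (\<Sum>q\<in>A. frag_of (l q, c q)) \<in> tensor_rel L KK C"
  proof -
    have "x - (\<Sum>q\<in>A. frag_of (l q, c q)) =
      (\<Sum>q\<in>A. frag_cmul (Poly_Mapping.lookup x q) (frag_of (fst q, snd q)) - frag_of (l q, c q))"
      by (subst xe) (simp add: sum_subtractf)
    moreover have "(\<Sum>q\<in>A. frag_cmul (Poly_Mapping.lookup x q) (frag_of (fst q, snd q)) - frag_of (l q, c q))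
        \<in> tensor_rel L KK C"
      unfolding l_def c_def using AL by (intro rel_sum frag_cmul_rel[OF Lsub]) auto
    ultimately show ?thesis by simp
  qed
  have d2: "(\<Sum>q\<in>A. frag_of (l q, c q) - (\<Sum>p\<in>PP. frag_of (l q * E p, c q))) \<in> tensor_rel L KK C"
  proof (rule rel_sum)
    fix q assume q: "q \<in> A"
    have "l q = (\<Sum>p\<in>PP. l q * E p)" using E_sum by (simp add: sum_distrib_left[symmetric])
    moreover have "frag_of ((\<Sum>p\<in>PP. l q * E p), c q) - (\<Sum>p\<in>PP. frag_of (l q * E p, c q)) \<in> tensor_rel L KK C"
      using lL[OF q] cC[OF q] E_L subring_zero[OF Csub]
      by (intro frag_sum_l[OF Lsub]) (auto intro: subring_mult[OF Lsub])
    ultimately show "frag_of (l q, c q) - (\<Sum>p\<in>PP. frag_of (l q * E p, c q)) \<in> tensor_rel L KK C" by simp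
  qed
  have d3: "(\<Sum>p\<in>PP. \<Sum>q\<in>A. frag_of (l q * E p, c q)) \<in> tensor_rel L KK C"
  proof (rule rel_sum)
    fix p assume p: "p \<in> PP"
    have "(\<Sum>q\<in>A. (l q * E p) * c q) = E p * (\<Sum>q\<in>A. l q * c q)"
      by (simp add: sum_distrib_left algebra_simps)
    then have s: "(\<Sum>q\<in>A. (l q * E p) * c q) = 0" using lc by simp
    have "\<forall>q\<in>A. l q * E p \<in> L \<and> l q * E p * E p = l q * E p"
      using lL E_L[OF p] E_idem[OF p] subring_mult[OF Lsub] by (simp add: mult.assoc)
    moreover have es: "\<And>J. sideal J \<Longrightarrow> (\<And>x. x \<in> J \<Longrightarrow> x * E p = x) \<Longrightarrow> J \<subseteq> {0} \<or> E p \<in> J"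
      using E_simp[OF p] by blast
    note R = R_lemma[OF E_L[OF p] E_fix[OF p] es finA, of c]
    ultimately show "(\<Sum>q\<in>A. frag_of (l q * E p, c q)) \<in> tensor_rel L KK C"
      using spec[OF R, of "\<lambda>q. l q * E p"] cC s by blast
  qed
  have "x = (x - (\<Sum>q\<in>A. frag_of (l q, c q))) +
     (\<Sum>q\<in>A. frag_of (l q, c q) - (\<Sum>p\<in>PP. frag_of (l q * E p, c q))) +
     (\<Sum>p\<in>PP. \<Sum>q\<in>A. frag_of (l q * E p, c q))"
    by (simp add: sum_subtractf sum.swap[of _ PP A])
  then show "x \<in> tensor_rel L KK C" using tensor_rel.add[OF tensor_rel.add[OF d1 d2] d3] by metis
qed

end

theorem corollary1:
  fixes act :: "int \<times> 'g::{finite, ab_group_add} \<Rightarrow> 'b::comm_ring_1 \<Rightarrow> 'b"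
    and L C :: "'b set"
  assumes "ring_action act"
    and "pseudofield act UNIV L"
    and "Sigma1_closed act (invariants act L)"
    and "is_subring C" and "C \<subseteq> invariants act UNIV" and "stable act Sigma1 C"
    and "invariants act L \<subseteq> C"
  shows "tensor_mult_injective L (invariants act L) C"
proof -
  interpret cor_setup act L C
    using assms by unfold_locales (auto simp: pseudofield_def)
  show ?thesis by (rule main)
qed


end
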